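(* Let $m\ge 1$ and let $A_1,\dots,A_m$ be states, with $A_{m+1}:=A_1$. Let $\varepsilon\ge 0$ with $m\varepsilon<1$. Then $$\sum_{i=1}^{m}W^{\varepsilon}(A_i\to A_{i+1})\ \le\ W^{m\varepsilon}(A_1\to A_1).$$ Moreover $W^0(A\to A)=0$ for every state $A$. Hence for $\varepsilon=0$ the left-hand side is at most $0$.
   Context: Conventions. The constants $k>0$ (Boltzmann's constant) and $T>0$ (temperature) are fixed. A state is a finite-level system with energies $E_1,\dots,E_d\in\mathbb{R}\cup\{+\infty\}$, not all $+\infty$, together with a diagonal density matrix $\rho=\sum_i\lambda_i|e_i\rangle\langle e_i|$. Equivalently, it is a probability vector $(\lambda_i)$ over the levels, and we require $\lambda_i=0$ whenever $E_i=+\infty$. Gibbs rescaling. $G^T(\rho)$ is the function on $[0,\infty)$ built as follows. Each level $i$ with $E_i<\infty$ is represented by a block: an interval of length $e^{-E_i/kT}$ on which the function takes the constant value $\lambda_i e^{E_i/kT}$, so the block has area $\lambda_i$. The blocks are placed consecutively starting at $0$, in order of nonincreasing height. The function is $0$ beyond $Z=\sum_{i:E_i<\infty}e^{-E_i/kT}$. Thus $G^T(\rho)$ is a nonincreasing probability density supported in $[0,Z]$. Relative mixedness. For nonincreasing integrable functions $f,g\ge 0$ on $[0,\infty)$, $$M(f\|g):=\max\Big\{m>0:\ \int_0^l f(x)\,dx\ge\int_0^{lm}g(x)\,dx\ \text{for all } l\ge 0\Big\}.$$ For $\varepsilon\in[0,1)$ define $$W^\varepsilon(\rho\to\sigma):=kT\ln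 M\big(G^T(\rho)/(1-\varepsilon)\,\big\|\,G^T(\sigma)\big).$$ *)

theory Defs
  imports "HOL-Analysis.Analysis" "HOL-Library.Extended_Real"
begin

text \<open>A state is a list of levels (E_i, lambda_i): energy E_i in R \<union> {+\<infinity>}
  (an ereal different from -\<infinity>) and occupation probability lambda_i.\<close>
type_synonym state = "(ereal \<times> real) list"

definition valid_state :: "state \<Rightarrow> bool" where
  "valid_state s \<longleftrightarrow>
     (\<forall>(E, l) \<in> set s. E \<noteq> -\<infinity>) \<and>
     (\<exists>(E, l) \<in> set s. E \<noteq> \<infinity>) \<and>
     (\<forall>(E, l) \<in> set s. l \<ge> 0) \<and>
     (\<Sum>(E, l) \<leftarrow> s. l) = 1 \<and>
     (\<forall>(E, l) \<in> set s. E = \<infinity> \<longrightarrow> l = 0)"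

definition gibbs_blocks :: "real \<Rightarrow> real \<Rightarrow> state \<Rightarrow> (real \<times> real) list" where
  "gibbs_blocks k T s =
     [(l * exp (real_of_ereal E / (k * T)), exp (- real_of_ereal E / (k * T))).
        (E, l) \<leftarrow> s, E \<noteq> \<infinity>]"

fun place_blocks :: "(real \<times> real) list \<Rightarrow> real \<Rightarrow> real" where
  "place_blocks [] x = 0"
| "place_blocks ((h, w) # bs) x = (if x < w then h else place_blocks bs (x - w))"

definition gibbs :: "real \<Rightarrow> real \<Rightarrow> state \<Rightarrow> real \<Rightarrow> real" where
  "gibbs k T s = place_blocks (rev (sort_key fst (gibbs_blocks k T s)))"

definition rel_mix :: "(real \<Rightarrow> real) \<Rightarrow> (real \<Rightarrow> real) \<Rightarrow> real" where
  "rel_mix f g = (GREATEST m. m > 0 \<and>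
      (\<forall>l\<ge>0. integral {0..l} f \<ge> integral {0..l * m} g))"

definition work :: "real \<Rightarrow> real \<Rightarrow> real \<Rightarrow> state \<Rightarrow> state \<Rightarrow> real" where
  "work k T eps \<rho> \<sigma> =
     k * T * ln (rel_mix (\<lambda>x. gibbs k T \<rho> x / (1 - eps)) (gibbs k T \<sigma>))"

end

theory Submission
  imports Defs
begin

fun cum :: "(real \<times> real) list \<Rightarrow> real \<Rightarrow> real" where
  "cum [] l = 0"
| "cum ((h, w) # bs) l = (if l \<le> w then h * l else h * w + cum bs (l - w))"

lemma pb_has_integral:
  assumes "\<forall>(h,w)\<in>set bs. w > 0" "0 \<le> l"
  shows "(place_blocks bs has_integral cum bs l) {0..l}"
  using assms
proof (induction bs arbitrary: l)
  case Nil
  then show ?case using has_integral_0[of "{0..l}"] by simp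
next
  case (Cons p bs)
  obtain h w where p: "p = (h,w)" by fastforce
  have w: "w > 0" using Cons.prems p by auto
  have c1: "(place_blocks (p#bs) has_integral h * x) {0..x}" if "0 \<le> x" "x \<le> w" for x
  proof -
    have hc: "((\<lambda>_. h) has_integral h * x) {0..x}"
      using has_integral_const_real[of h 0 x] that by (simp add: mult.commute)
    show ?thesis
      by (intro has_integral_spike_finite[where S="{w}", OF _ _ hc]) (use that p in auto)
  qed
  show ?case
  proof (cases "l \<le> w")
    case True
    then show ?thesis using c1[OF Cons.prems(2) True] p by (simp del: place_blocks.simps)
  next
    case False
    have ih: "(place_blocks bs has_integral cum bs (l - w)) {0..l-w}"
      using Cons.IH[of "l-w"] Cons.prems False by auto
    have hs: "((\<lambda>x. place_blocks bs (x - w)) has_integral cum bs (l - w)) {w..l}"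
      using has_integral_shift_Icc_real[of "\<lambda>x. place_blocks bs (x - w)" w "cum bs (l-w)" 0 "l-w"] ih
      by (simp add: o_def)
    have i2: "(place_blocks (p#bs) has_integral cum bs (l - w)) {w..l}"
      by (intro has_integral_spike_finite[where S="{}", OF _ _ hs]) (use p in auto)
    have "(place_blocks (p#bs) has_integral h*w + cum bs (l - w)) {0..l}"
      by (rule has_integral_combine[OF _ _ c1[of w] i2]) (use w False in auto)
    then show ?thesis using False p by (simp del: place_blocks.simps)
  qed
qed

definition Zw :: "(real \<times> real) list \<Rightarrow> real" where
  "Zw bs = sum_list (map snd bs)"
definition tot :: "(real \<times> real) list \<Rightarrow> real" where
  "tot bs = sum_list (map (\<lambda>(h,w). h * w) bs)"

lemma cum0: "\<forall>(h,w)\<in>set bs. w > 0 \<Longrightarrow> cum bs 0 = 0"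
  by (cases bs) auto

lemma Zw_nonneg: "\<forall>(h,w)\<in>set bs. w > 0 \<Longrightarrow> Zw bs \<ge> 0"
  unfolding Zw_def by (induction bs) (auto simp: add_nonneg_nonneg less_imp_le)

lemma cum_slope:
  assumes "\<forall>(h,w)\<in>set bs. w > 0" "\<forall>(h,w)\<in>set bs. 0 \<le> h \<and> h \<le> c" "0 \<le> a" "a \<le> b" "0 \<le> c"
  shows "0 \<le> cum bs b - cum bs a \<and> cum bs b - cum bs a \<le> c * (b - a)"
  using assms
proof (induction bs arbitrary: a b)
  case Nil
  then show ?case by simp
next
  case (Cons p r)
  obtain h w where p: "p = (h,w)" by fastforce
  have w: "w > 0" and h: "0 \<le> h" "h \<le> c" using Cons.prems p by auto
  have c: "0 \<le> c" using h by linarith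
  consider "b \<le> w" | "a \<le> w" "w < b" | "w < a" using Cons.prems by linarith
  then show ?case
  proof cases
    case 1
    then have "cum (p#r) b - cum (p#r) a = h * (b - a)" using p Cons.prems by (simp add: algebra_simps)
    moreover have "h * (b - a) \<le> c * (b - a)" using h Cons.prems by (intro mult_right_mono) auto
    moreover have "0 \<le> h * (b - a)" using h Cons.prems by simp
    ultimately show ?thesis by simp
  next
    case 2
    have ih: "0 \<le> cum r (b - w) - cum r 0 \<and> cum r (b - w) - cum r 0 \<le> c * (b - w - 0)"
      using Cons.IH[of 0 "b - w"] Cons.prems 2 by auto
    have r0: "cum r 0 = 0" using cum0 Cons.prems by auto
    have e: "cum (p#r) b - cum (p#r) a = h * (w - a) + (cum r (b - w) - cum r 0)" using p 2 r0
      by (simp add: algebra_simps)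
    have "h * (w - a) \<le> c * (w - a)" using h 2 by (intro mult_right_mono) auto
    moreover have "0 \<le> h * (w - a)" using h 2 by simp
    ultimately show ?thesis using e ih by (simp add: algebra_simps)
  next
    case 3
    have ih: "0 \<le> cum r (b - w) - cum r (a - w) \<and> cum r (b - w) - cum r (a - w) \<le> c * (b - w - (a - w))"
      using Cons.IH[of "a - w" "b - w"] Cons.prems 3 by auto
    then show ?thesis using p 3 Cons.prems by simp
  qed
qed

lemma cum_total:
  assumes "\<forall>(h,w)\<in>set bs. w > 0" "Zw bs \<le> l"
  shows "cum bs l = tot bs"
  using assms
proof (induction bs arbitrary: l)
  case Nil
  then show ?case by (simp add: tot_def)
next
  case (Cons p r)
  obtain h w where p: "p = (h,w)" by fastforce
  have w: "w > 0" using Cons.prems p by auto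
  have Z: "Zw (p#r) = w + Zw r" using p by (simp add: Zw_def)
  have Zr: "Zw r \<ge> 0" using Zw_nonneg Cons.prems by auto
  have T: "tot (p#r) = h * w + tot r" using p by (simp add: tot_def)
  have ih: "cum r (l - w) = tot r" using Cons.IH[of "l - w"] Cons.prems Z by auto
  show ?case
  proof (cases "l \<le> w")
    case True
    then have "l = w" using Z Zr Cons.prems by linarith
    then show ?thesis using ih cum0[of r] Cons.prems p T by auto
  next
    case False
    then show ?thesis using ih p T by simp
  qed
qed

lemma tot_le:
  assumes "\<forall>(h,w)\<in>set bs. w \<ge> 0 \<and> 0 \<le> h \<and> h \<le> c"
  shows "tot bs \<le> c * Zw bs"
  using assms
proof (induction bs)
  case Nil
  then show ?case by (simp add: tot_def Zw_def)
next
  case (Cons p r)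
  obtain h w where p: "p = (h,w)" by fastforce
  have "h * w \<le> c * w" using Cons.prems p by (intro mult_right_mono) auto
  then show ?case using Cons p by (simp add: tot_def Zw_def algebra_simps)
qed

lemma cum_concave:
  assumes "\<forall>(h,w)\<in>set bs. w > 0" "\<forall>(h,w)\<in>set bs. 0 \<le> h"
    "sorted_wrt (\<lambda>a b. fst b \<le> fst a) bs" "0 \<le> l" "l \<le> Zw bs"
  shows "l * tot bs \<le> Zw bs * cum bs l"
  using assms
proof (induction bs arbitrary: l)
  case Nil
  then show ?case by (simp add: tot_def Zw_def)
next
  case (Cons p r)
  obtain h w where p: "p = (h,w)" by fastforce
  have w: "w > 0" and h: "0 \<le> h" using Cons.prems p by auto
  have hr: "\<forall>(h',w')\<in>set r. 0 \<le> h' \<and> h' \<le> h" using Cons.prems p by auto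
  have Z: "Zw (p#r) = w + Zw r" using p by (simp add: Zw_def)
  have Zr: "Zw r \<ge> 0" using Zw_nonneg Cons.prems by auto
  have T: "tot (p#r) = h * w + tot r" using p by (simp add: tot_def)
  show ?case
  proof (cases "l \<le> w")
    case True
    have "tot r \<le> h * Zw r" using tot_le[of r h] hr Cons.prems by fastforce
    then have "l * tot r \<le> l * (h * Zw r)" using Cons.prems by (intro mult_left_mono) auto
    then show ?thesis using True p Z T by (simp add: algebra_simps)
  next
    case False
    define l' where "l' = l - w"
    have l': "0 \<le> l'" "l' \<le> Zw r" using False Cons.prems Z by (auto simp: l'_def)
    have ih: "l' * tot r \<le> Zw r * cum r l'" using Cons.IH[of l'] Cons.prems l' by auto
    have sl: "cum r (Zw r) - cum r l' \<le> h * (Zw r - l')"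
      using cum_slope[of r h l' "Zw r"] hr Cons.prems l' h by auto
    have tr: "cum r (Zw r) = tot r" using cum_total[of r "Zw r"] Cons.prems by auto
    have "w * (tot r - cum r l') \<le> w * (h * (Zw r - l'))" using sl tr w by (intro mult_left_mono) auto
    then have "(w + l') * (h * w + tot r) \<le> (w + Zw r) * (h * w + cum r l')"
      using ih by (simp add: algebra_simps)
    then show ?thesis using False p Z T by (simp add: l'_def)
  qed
qed

lemma rel_mix_char:
  fixes f g :: "real \<Rightarrow> real"
  assumes m0: "m0 > 0" "\<forall>l\<ge>0. integral {0..l * m0} g \<le> integral {0..l} f"
    and bnd: "\<forall>m. m > 0 \<and> (\<forall>l\<ge>0. integral {0..l * m} g \<le> integral {0..l} f) \<longrightarrow> m \<le> B"
    and L: "0 \<le> L" "\<forall>a b. 0 \<le> a \<longrightarrow> a \<le> b \<longrightarrow> integral {0..b} g - integral {0..a} g \<le> L * (b - a)"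
  shows "rel_mix f g > 0 \<and> (\<forall>l\<ge>0. integral {0..l * rel_mix f g} g \<le> integral {0..l} f)
     \<and> (\<forall>m. m > 0 \<and> (\<forall>l\<ge>0. integral {0..l * m} g \<le> integral {0..l} f) \<longrightarrow> m \<le> rel_mix f g)"
proof -
  define P where "P = (\<lambda>m. m > 0 \<and> (\<forall>l\<ge>0. integral {0..l * m} g \<le> integral {0..l} f))"
  define S where "S = Collect P"
  have m0S: "m0 \<in> S" using m0 by (simp add: S_def P_def)
  have ne: "S \<noteq> {}" using m0S by auto
  have bdd: "bdd_above S" using bnd unfolding bdd_above_def S_def P_def by auto
  define s where "s = Sup S"
  have ub: "m \<le> s" if "m \<in> S" for m using cSup_upper[OF that bdd] by (simp add: s_def)
  have spos: "s > 0" using ub[OF m0S] m0 by linarith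
  have sS: "P s"
    unfolding P_def
  proof (intro conjI spos allI impI)
    fix l :: real assume l: "0 \<le> l"
    show "integral {0..l * s} g \<le> integral {0..l} f"
    proof (rule ccontr)
      assume nc: "\<not> ?thesis"
      define d where "d = integral {0..l * s} g - integral {0..l} f"
      have d: "d > 0" using nc by (simp add: d_def)
      have lpos: "l > 0"
      proof (rule ccontr)
        assume "\<not> l > 0"
        then have "l = 0" using l by simp
        then show False using nc m0 by auto
      qed
      have Ll: "0 \<le> L * l" using L lpos by simp
      have "s - d / (L*l+1) < s" using d Ll by simp
      then obtain m where mS: "m \<in> S" and mgt: "s - d / (L*l+1) < m"
        using less_cSup_iff[OF ne bdd] by (auto simp: s_def)
      have ms: "m \<le> s" using ub[OF mS] .
      have mpos: "m > 0" using mS by (simp add: S_def P_def)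
      have fm: "integral {0..l * m} g \<le> integral {0..l} f" using mS l by (simp add: S_def P_def)
      have "integral {0..l * s} g - integral {0..l * m} g \<le> L * (l * s - l*m)"
        using L(2) lpos mpos ms by (auto intro!: mult_left_mono)
      also have "\<dots> = (L*l) * (s - m)" by (simp add: algebra_simps)
      also have "\<dots> \<le> (L*l + 1) * (s - m)" using ms by (intro mult_right_mono) auto
      also have "\<dots> < d"
      proof -
        have "s - m < d / (L*l+1)" using mgt by simp
        then show ?thesis using Ll by (simp add: field_simps)
      qed
      finally show False using fm by (simp add: d_def)
    qed
  qed
  have "rel_mix f g = s"
    unfolding rel_mix_def
    by (rule Greatest_equality) (use sS ub in \<open>auto simp: P_def S_def\<close>)
  then show ?thesis using sS ub by (auto simp: P_def S_def)
qed

definition blocks :: "real \<Rightarrow> real \<Rightarrow> state \<Rightarrow> (real \<times> real) list" where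
  "blocks k T s = rev (sort_key fst (gibbs_blocks k T s))"

lemma set_gibbs_blocks:
  "x \<in> set (gibbs_blocks k T s) \<Longrightarrow>
     \<exists>E l. (E, l) \<in> set s \<and> x = (l * exp (real_of_ereal E / (k * T)), exp (- real_of_ereal E / (k * T)))"
  by (auto simp: gibbs_blocks_def)

lemma tot_gibbs_blocks:
  assumes "\<forall>(E, l) \<in> set s. E = \<infinity> \<longrightarrow> l = 0"
  shows "tot (gibbs_blocks k T s) = (\<Sum>(E, l) \<leftarrow> s. l)"
  using assms
proof (induction s)
  case Nil
  then show ?case by (simp add: tot_def gibbs_blocks_def)
next
  case (Cons p s)
  obtain E l where p: "p = (E, l)" by fastforce
  have e: "exp (real_of_ereal E / (k * T)) * exp (- real_of_ereal E / (k * T)) = 1"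
    by (simp add: mult_exp_exp)
  show ?case using Cons p e by (auto simp: tot_def gibbs_blocks_def mult.assoc)
qed

lemma tot_perm: "mset xs = mset ys \<Longrightarrow> tot xs = tot ys"
  unfolding tot_def by (metis mset_map sum_mset_sum_list)

lemma blocks_props:
  assumes "valid_state s"
  shows "\<forall>(h,w)\<in>set (blocks k T s). w > 0"
    and "\<forall>(h,w)\<in>set (blocks k T s). 0 \<le> h"
    and "sorted_wrt (\<lambda>a b. fst b \<le> fst a) (blocks k T s)"
    and "tot (blocks k T s) = 1"
proof -
  have st: "set (blocks k T s) = set (gibbs_blocks k T s)" by (simp add: blocks_def)
  show "\<forall>(h,w)\<in>set (blocks k T s). w > 0"
    unfolding st by (auto dest!: set_gibbs_blocks)
  show "\<forall>(h,w)\<in>set (blocks k T s). 0 \<le> h"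
    unfolding st using assms by (fastforce dest!: set_gibbs_blocks simp: valid_state_def)
  show "sorted_wrt (\<lambda>a b. fst b \<le> fst a) (blocks k T s)"
    unfolding blocks_def sorted_wrt_rev
    using sorted_sort_key[of fst "gibbs_blocks k T s"] by (simp add: sorted_map)
  have "tot (blocks k T s) = tot (gibbs_blocks k T s)"
    by (rule tot_perm) (simp add: blocks_def)
  also have "\<dots> = 1" using tot_gibbs_blocks[of s k T] assms by (auto simp: valid_state_def)
  finally show "tot (blocks k T s) = 1" .
qed

lemma state_cum:
  assumes "valid_state s"
  obtains h Z w where "h > 0" "Z > 0" "w > 0"
    "\<And>a b. 0 \<le> a \<Longrightarrow> a \<le> b \<Longrightarrow> 0 \<le> cum (blocks k T s) b - cum (blocks k T s) a \<and>
        cum (blocks k T s) b - cum (blocks k T s) a \<le> h * (b - a)"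
    "cum (blocks k T s) 0 = 0"
    "\<And>l. Z \<le> l \<Longrightarrow> cum (blocks k T s) l = 1"
    "\<And>l. 0 \<le> l \<Longrightarrow> l \<le> Z \<Longrightarrow> l \<le> Z * cum (blocks k T s) l"
    "\<And>x. 0 \<le> x \<Longrightarrow> x \<le> w \<Longrightarrow> cum (blocks k T s) x = h * x"
proof -
  let ?bs = "blocks k T s"
  note P = blocks_props[OF assms, of k T]
  have "?bs \<noteq> []" using P(4) by (auto simp: tot_def)
  then obtain h w r where bs: "?bs = (h,w) # r" by (metis list.exhaust surj_pair)
  have w: "w > 0" using P(1) bs by auto
  have hge: "\<forall>(h',w')\<in>set ?bs. 0 \<le> h' \<and> h' \<le> h" using P(2,3) bs by auto
  have h: "h > 0"
  proof (rule ccontr)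
    assume "\<not> h > 0"
    then have "\<forall>(h',w')\<in>set ?bs. w' \<ge> 0 \<and> 0 \<le> h' \<and> h' \<le> 0" using hge P(1) by fastforce
    then have "tot ?bs \<le> 0 * Zw ?bs" by (rule tot_le)
    then show False using P(4) by simp
  qed
  have Z: "Zw ?bs > 0" using bs w Zw_nonneg[of r] P(1) by (auto simp: Zw_def)
  show ?thesis
  proof (rule that[OF h Z w])
    show "\<And>a b. 0 \<le> a \<Longrightarrow> a \<le> b \<Longrightarrow> 0 \<le> cum ?bs b - cum ?bs a \<and> cum ?bs b - cum ?bs a \<le> h * (b - a)"
      using cum_slope[of ?bs h] P(1) hge h by auto
    show "cum ?bs 0 = 0" using cum0 P(1) by blast
    show "\<And>l. Zw ?bs \<le> l \<Longrightarrow> cum ?bs l = 1" using cum_total P(1) P(4) by metis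
    show "\<And>l. 0 \<le> l \<Longrightarrow> l \<le> Zw ?bs \<Longrightarrow> l \<le> Zw ?bs * cum ?bs l"
      using cum_concave[of ?bs] P by fastforce
    show "\<And>x. 0 \<le> x \<Longrightarrow> x \<le> w \<Longrightarrow> cum ?bs x = h * x" using bs by simp
  qed
qed

lemma gibbs_integral:
  assumes "valid_state s" "0 \<le> x"
  shows "integral {0..x} (gibbs k T s) = cum (blocks k T s) x"
    and "integral {0..x} (\<lambda>y. gibbs k T s y / c) = cum (blocks k T s) x / c"
proof -
  have "(gibbs k T s has_integral cum (blocks k T s) x) {0..x}"
    using pb_has_integral[of "blocks k T s" x] blocks_props(1)[OF assms(1)] assms(2)
    by (simp add: gibbs_def blocks_def)
  then show "integral {0..x} (gibbs k T s) = cum (blocks k T s) x"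
    and "integral {0..x} (\<lambda>y. gibbs k T s y / c) = cum (blocks k T s) x / c"
    using has_integral_divide by (blast intro: integral_unique)+
qed

lemma rel_mix_state:
  assumes vr: "valid_state \<rho>" and vs: "valid_state \<sigma>" and e: "0 \<le> e" "e < 1"
  shows "rel_mix (\<lambda>x. gibbs k T \<rho> x / (1 - e)) (gibbs k T \<sigma>) > 0 \<and>
    (\<forall>l\<ge>0. cum (blocks k T \<sigma>) (l * rel_mix (\<lambda>x. gibbs k T \<rho> x / (1 - e)) (gibbs k T \<sigma>))
        \<le> cum (blocks k T \<rho>) l / (1 - e)) \<and>
    (\<forall>m. m > 0 \<and> (\<forall>l\<ge>0. cum (blocks k T \<sigma>) (l * m) \<le> cum (blocks k T \<rho>) l / (1 - e))
        \<longrightarrow> m \<le> rel_mix (\<lambda>x. gibbs k T \<rho> x / (1 - e)) (gibbs k T \<sigma>))"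
proof -
  let ?f = "\<lambda>x. gibbs k T \<rho> x / (1 - e)" and ?g = "gibbs k T \<sigma>"
  let ?R = "cum (blocks k T \<rho>)" and ?S = "cum (blocks k T \<sigma>)"
  obtain hr Zr wr where R: "hr > 0" "Zr > 0" "wr > 0"
    "\<And>a b. 0 \<le> a \<Longrightarrow> a \<le> b \<Longrightarrow> 0 \<le> ?R b - ?R a \<and> ?R b - ?R a \<le> hr * (b - a)"
    "?R 0 = 0" "\<And>l. Zr \<le> l \<Longrightarrow> ?R l = 1" "\<And>l. 0 \<le> l \<Longrightarrow> l \<le> Zr \<Longrightarrow> l \<le> Zr * ?R l"
    "\<And>x. 0 \<le> x \<Longrightarrow> x \<le> wr \<Longrightarrow> ?R x = hr * x"
    using state_cum[OF vr, of k T] by blast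
  obtain hs Zs ws where S: "hs > 0" "Zs > 0" "ws > 0"
    "\<And>a b. 0 \<le> a \<Longrightarrow> a \<le> b \<Longrightarrow> 0 \<le> ?S b - ?S a \<and> ?S b - ?S a \<le> hs * (b - a)"
    "?S 0 = 0" "\<And>l. Zs \<le> l \<Longrightarrow> ?S l = 1"
    "\<And>l. 0 \<le> l \<Longrightarrow> l \<le> Zs \<Longrightarrow> l \<le> Zs * ?S l"
    "\<And>x. 0 \<le> x \<Longrightarrow> x \<le> ws \<Longrightarrow> ?S x = hs * x"
    using state_cum[OF vs, of k T] by blast
  have ig: "integral {0..x} ?g = ?S x" if "0 \<le> x" for x using gibbs_integral(1)[OF vs that] .
  have if': "integral {0..x} ?f = ?R x / (1 - e)" if "0 \<le> x" for x using gibbs_integral(2)[OF vr that] .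
  have conv: "(\<forall>l\<ge>0. integral {0..l * m} ?g \<le> integral {0..l} ?f) \<longleftrightarrow>
      (\<forall>l\<ge>0. ?S (l * m) \<le> ?R l / (1 - e))" if "m > 0" for m
  proof -
    have "integral {0..l * m} ?g \<le> integral {0..l} ?f \<longleftrightarrow> ?S (l * m) \<le> ?R l / (1 - e)"
      if "0 \<le> l" for l
    proof -
      have "0 \<le> l * m" using that \<open>m > 0\<close> by simp
      then show ?thesis by (simp only: ig[of "l * m"] if'[OF that])
    qed
    then show ?thesis by blast
  qed
  have Rnn: "0 \<le> ?R l" if "0 \<le> l" for l using R(4)[of 0 l] R(5) that by auto
  have Sle1: "?S x \<le> 1" if "0 \<le> x" for x
    using S(4)[of x "max x Zs"] S(6)[of "max x Zs"] that by auto
  have Sle: "?S x \<le> hs * x" if "0 \<le> x" for x using S(4)[of 0 x] S(5) that by auto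
  have Rle: "?R x \<le> hr * x" if "0 \<le> x" for x using R(4)[of 0 x] R(5) that by auto
  define m0 where "m0 = 1 / (hs * Zr)"
  have m0: "m0 > 0" using S R by (simp add: m0_def)
  have m0ok: "?S (l * m0) \<le> ?R l / (1 - e)" if l: "0 \<le> l" for l
  proof -
    have "?R l \<le> ?R l / (1 - e)" using Rnn[OF l] e by (simp add: le_divide_eq mult_left_le)
    moreover have "?S (l * m0) \<le> ?R l"
    proof (cases "Zr \<le> l")
      case True
      then show ?thesis using R(6) Sle1 l m0 by simp
    next
      case False
      have "?S (l * m0) \<le> hs * (l * m0)" using Sle l m0 by simp
      also have "\<dots> = l / Zr" using S R by (simp add: m0_def field_simps)
      also have "\<dots> \<le> ?R l" using R(7)[of l] l False R(2) by (simp add: divide_le_eq mult.commute)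
      finally show ?thesis .
    qed
    ultimately show ?thesis by linarith
  qed
  define B where "B = hr * Zs / (1 - e)"
  have bnd: "m \<le> B" if m: "m > 0" "\<forall>l\<ge>0. ?S (l * m) \<le> ?R l / (1 - e)" for m
  proof -
    have l: "0 \<le> Zs / m" using m S by simp
    have "1 = ?S (Zs / m * m)" using S(6) m by simp
    also have "\<dots> \<le> ?R (Zs / m) / (1 - e)" using m(2) l by blast
    also have "\<dots> \<le> hr * (Zs / m) / (1 - e)" using Rle[OF l] e by (intro divide_right_mono) auto
    finally have "1 \<le> hr * (Zs / m) / (1 - e)" .
    then have "m * (1 - e) \<le> hr * Zs" using m e by (simp add: field_simps)
    then show ?thesis using e by (simp add: B_def field_simps)
  qed
  have "rel_mix ?f ?g > 0 \<and> (\<forall>l\<ge>0. integral {0..l * rel_mix ?f ?g} ?g \<le> integral {0..l} ?f)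
     \<and> (\<forall>m. m > 0 \<and> (\<forall>l\<ge>0. integral {0..l * m} ?g \<le> integral {0..l} ?f) \<longrightarrow> m \<le> rel_mix ?f ?g)"
  proof (rule rel_mix_char[where ?m0.0=m0 and B=B and L=hs])
    show "0 < m0" by (rule m0)
    show "\<forall>l\<ge>0. integral {0..l * m0} ?g \<le> integral {0..l} ?f" using conv[OF m0] m0ok by blast
    show "\<forall>m. 0 < m \<and> (\<forall>l\<ge>0. integral {0..l * m} ?g \<le> integral {0..l} ?f) \<longrightarrow> m \<le> B"
    proof (intro allI impI)
      fix m assume "0 < m \<and> (\<forall>l\<ge>0. integral {0..l * m} ?g \<le> integral {0..l} ?f)"
      then show "m \<le> B" using conv[of m] bnd[of m] by blast
    qed
    show "0 \<le> hs" using S by simp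
    show "\<forall>a b. 0 \<le> a \<longrightarrow> a \<le> b \<longrightarrow> integral {0..b} ?g - integral {0..a} ?g \<le> hs * (b - a)"
    proof (intro allI impI)
      fix a b :: real assume ab: "0 \<le> a" "a \<le> b"
      then show "integral {0..b} ?g - integral {0..a} ?g \<le> hs * (b - a)"
        using S(4)[OF ab] ig[of a] ig[of b] by simp
    qed
  qed
  then have A: "rel_mix ?f ?g > 0" and B: "\<forall>l\<ge>0. integral {0..l * rel_mix ?f ?g} ?g \<le> integral {0..l} ?f"
    and C: "\<forall>m. m > 0 \<and> (\<forall>l\<ge>0. integral {0..l * m} ?g \<le> integral {0..l} ?f) \<longrightarrow> m \<le> rel_mix ?f ?g"
    by blast+
  show ?thesis
  proof (intro conjI A)
    show "\<forall>l\<ge>0. ?S (l * rel_mix ?f ?g) \<le> ?R l / (1 - e)" using conv[OF A] B by blast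
    show "\<forall>m. m > 0 \<and> (\<forall>l\<ge>0. ?S (l * m) \<le> ?R l / (1 - e)) \<longrightarrow> m \<le> rel_mix ?f ?g"
    proof (intro allI impI)
      fix m assume "m > 0 \<and> (\<forall>l\<ge>0. ?S (l * m) \<le> ?R l / (1 - e))"
      then show "m \<le> rel_mix ?f ?g" using conv[of m] C by blast
    qed
  qed
qed

lemma work_self:
  assumes v: "valid_state B"
  shows "work k T 0 B B = 0"
proof -
  let ?M = "rel_mix (\<lambda>x. gibbs k T B x / (1 - 0)) (gibbs k T B)"
  let ?C = "cum (blocks k T B)"
  have P: "?M > 0" "\<forall>l\<ge>0. ?C (l * ?M) \<le> ?C l / (1 - 0)"
    "\<forall>m. m > 0 \<and> (\<forall>l\<ge>0. ?C (l * m) \<le> ?C l / (1 - 0)) \<longrightarrow> m \<le> ?M"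
    using rel_mix_state[OF v v order.refl zero_less_one, of k T] by blast+
  obtain h Z w where S0: "h > 0" "Z > 0" "w > 0"
    "\<And>a b. 0 \<le> a \<Longrightarrow> a \<le> b \<Longrightarrow> 0 \<le> ?C b - ?C a \<and> ?C b - ?C a \<le> h * (b - a)"
    "?C 0 = 0" "\<And>l. Z \<le> l \<Longrightarrow> ?C l = 1" "\<And>l. 0 \<le> l \<Longrightarrow> l \<le> Z \<Longrightarrow> l \<le> Z * ?C l"
    "\<And>x. 0 \<le> x \<Longrightarrow> x \<le> w \<Longrightarrow> ?C x = h * x"
    using state_cum[OF v, of k T] by blast
  note S = S0(1) S0(3) S0(8)
  have ge: "1 \<le> ?M" using P(3) by simp
  have le: "?M \<le> 1"
  proof (rule ccontr)
    assume "\<not> ?M \<le> 1"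
    then have M1: "?M > 1" by simp
    define l where "l = w / ?M"
    have l: "0 \<le> l" "l \<le> w" "l * ?M = w" using M1 S(2) by (auto simp: l_def field_simps)
    have "?C (l * ?M) \<le> ?C l / (1 - 0)" using P(2) l(1) by blast
    then have "h * w \<le> h * l" using l S(3)[of w] S(3)[of l] S(2) by simp
    then have "w \<le> l" using S(1) by simp
    moreover have "l < w" using M1 S(2) by (simp add: l_def field_simps)
    ultimately show False by simp
  qed
  have "?M = 1" using ge le by simp
  then show ?thesis by (simp add: work_def)
qed

theorem mainTheorem4:
  fixes k T :: real
  assumes "k > 0" and "T > 0"
  shows "(\<forall>(m::nat) (A::nat \<Rightarrow> state) (eps::real).
            m \<ge> 1 \<longrightarrow> (\<forall>i\<in>{1..m}. valid_state (A i)) \<longrightarrow> eps \<ge> 0 \<longrightarrow> real m * eps < 1 \<longrightarrow>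
            (\<Sum>i=1..m. work k T eps (A i) (A (if i = m then 1 else i + 1)))
              \<le> work k T (real m * eps) (A 1) (A 1))
       \<and> (\<forall>B. valid_state B \<longrightarrow> work k T 0 B B = 0)
       \<and> (\<forall>(m::nat) (A::nat \<Rightarrow> state).
            m \<ge> 1 \<longrightarrow> (\<forall>i\<in>{1..m}. valid_state (A i)) \<longrightarrow>
            (\<Sum>i=1..m. work k T 0 (A i) (A (if i = m then 1 else i + 1))) \<le> 0)"
proof -
  have part1: "(\<Sum>i=1..m. work k T eps (A i) (A (if i = m then 1 else i + 1)))
              \<le> work k T (real m * eps) (A 1) (A 1)"
    if m: "m \<ge> 1" and vA: "\<forall>i\<in>{1..m}. valid_state (A i)" and e: "eps \<ge> 0" "real m * eps < 1"
    for m A eps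
  proof -
    define nx where "nx i = (if i = m then 1 else i + 1)" for i :: nat
    define mm where "mm i = rel_mix (\<lambda>x. gibbs k T (A i) x / (1 - eps)) (gibbs k T (A (nx i)))" for i
    define C where "C i = cum (blocks k T (A i))" for i
    have e1: "eps < 1"
    proof -
      have "eps \<le> real m * eps" using m e by (simp add: mult_le_cancel_right1)
      then show ?thesis using e by linarith
    qed
    have nxin: "nx i \<in> {1..m}" if "i \<in> {1..m}" for i using that by (auto simp: nx_def)
    have F: "mm i > 0 \<and> (\<forall>l\<ge>0. C (nx i) (l * mm i) \<le> C i l / (1 - eps))" if i: "i \<in> {1..m}" for i
      using rel_mix_state[OF vA[rule_format, OF i] vA[rule_format, OF nxin[OF i]] e(1) e1, of k T]
      by (simp add: mm_def C_def)
    have Cnn: "0 \<le> C i x" if iI: "i \<in> {1..m}" and x0: "0 \<le> x" for i x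
    proof -
      obtain h Z w where S0: "h > 0" "Z > 0" "w > 0"
        "\<And>a b. 0 \<le> a \<Longrightarrow> a \<le> b \<Longrightarrow> 0 \<le> C i b - C i a \<and> C i b - C i a \<le> h * (b - a)"
        "C i 0 = 0" "\<And>l. Z \<le> l \<Longrightarrow> C i l = 1" "\<And>l. 0 \<le> l \<Longrightarrow> l \<le> Z \<Longrightarrow> l \<le> Z * C i l"
        "\<And>x. 0 \<le> x \<Longrightarrow> x \<le> w \<Longrightarrow> C i x = h * x"
        using state_cum[OF vA[rule_format, OF iI], of k T] unfolding C_def by blast
      note S = S0(4) S0(5)
      show ?thesis using S(1)[of 0 x] S(2) x0 by simp
    qed
    define P where "P j = (\<Prod>i\<in>{1..j}. mm i)" for j
    have Ppos: "P j > 0" if "j \<le> m" for j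
      unfolding P_def using F that by (intro prod_pos) auto
    have chain: "\<forall>l\<ge>0. (1 - eps) ^ j * C (j + 1) (l * P j) \<le> C 1 l" if "j < m" for j
      using that
    proof (induction j)
      case 0
      then show ?case by (simp add: P_def)
    next
      case (Suc j)
      show ?case
      proof (intro allI impI)
        fix l :: real assume l: "0 \<le> l"
        have ih: "(1 - eps) ^ j * C (j + 1) (l * P j) \<le> C 1 l" using Suc l by auto
        have j1: "j + 1 \<in> {1..m}" and nxj: "nx (j + 1) = j + 2" using Suc.prems by (auto simp: nx_def)
        have x: "0 \<le> l * P j" using l Ppos[of j] Suc.prems by simp
        have st: "C (j + 2) (l * P j * mm (j + 1)) \<le> C (j + 1) (l * P j) / (1 - eps)"
          using F[OF j1] x nxj by auto
        have PS: "P (Suc j) = P j * mm (j + 1)" by (simp add: P_def)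
        have "(1 - eps) ^ Suc j * C (Suc j + 1) (l * P (Suc j))
              = (1 - eps) ^ j * ((1 - eps) * C (j + 2) (l * P j * mm (j + 1)))"
          by (simp add: PS mult.assoc)
        also have "\<dots> \<le> (1 - eps) ^ j * C (j + 1) (l * P j)"
          using st e1 by (intro mult_left_mono) (auto simp: field_simps)
        also have "\<dots> \<le> C 1 l" by (rule ih)
        finally show "(1 - eps) ^ Suc j * C (Suc j + 1) (l * P (Suc j)) \<le> C 1 l" .
      qed
    qed
    obtain j where mj: "m = Suc j" using m by (cases m) auto
    have cyc: "(1 - eps) ^ m * C 1 (l * P m) \<le> C 1 l" if l: "0 \<le> l" for l
    proof -
      have c: "(1 - eps) ^ j * C m (l * P j) \<le> C 1 l" using chain[of j] mj l by auto
      have mi: "m \<in> {1..m}" using m by simp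
      have x: "0 \<le> l * P j" using l Ppos[of j] mj by simp
      have st: "C 1 (l * P j * mm m) \<le> C m (l * P j) / (1 - eps)"
        using F[OF mi] x by (auto simp: nx_def)
      have PS: "P m = P j * mm m" using mj by (simp add: P_def)
      have "(1 - eps) ^ m * C 1 (l * P m) = (1 - eps) ^ j * ((1 - eps) * C 1 (l * P j * mm m))"
      proof -
        have pw: "(1 - eps) ^ m = (1 - eps) ^ j * (1 - eps)" using mj by simp
        show ?thesis by (simp only: pw PS mult.assoc)
      qed
      also have "\<dots> \<le> (1 - eps) ^ j * C m (l * P j)"
        using st e1 by (intro mult_left_mono) (auto simp: field_simps)
      finally show ?thesis using c by linarith
    qed
    have v1: "valid_state (A 1)" using vA m by auto
    have em: "0 \<le> real m * eps" using e by simp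
    have R: "\<forall>p. p > 0 \<and> (\<forall>l\<ge>0. C 1 (l * p) \<le> C 1 l / (1 - real m * eps)) \<longrightarrow>
        p \<le> rel_mix (\<lambda>x. gibbs k T (A 1) x / (1 - real m * eps)) (gibbs k T (A 1))"
      using rel_mix_state[OF v1 v1 em e(2), of k T] by (simp add: C_def)
    have bern: "1 - real m * eps \<le> (1 - eps) ^ m"
      using Bernoulli_inequality[of "- eps" m] e1 e by simp
    have Pm: "P m > 0" using Ppos by simp
    have PR: "P m \<le> rel_mix (\<lambda>x. gibbs k T (A 1) x / (1 - real m * eps)) (gibbs k T (A 1))"
    proof -
      have "C 1 (l * P m) \<le> C 1 l / (1 - real m * eps)" if l: "0 \<le> l" for l
      proof -
        have nn: "0 \<le> C 1 (l * P m)" using Cnn[of 1 "l * P m"] m l Pm by simp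
        have "(1 - real m * eps) * C 1 (l * P m) \<le> (1 - eps) ^ m * C 1 (l * P m)"
          using bern nn by (rule mult_right_mono)
        also have "\<dots> \<le> C 1 l" using cyc[OF l] .
        finally show ?thesis using e(2) by (simp add: field_simps mult.commute)
      qed
      then show ?thesis using R Pm by blast
    qed
    have "(\<Sum>i=1..m. work k T eps (A i) (A (if i = m then 1 else i + 1))) = k * T * (\<Sum>i=1..m. ln (mm i))"
      by (simp add: work_def mm_def nx_def sum_distrib_left)
    also have "(\<Sum>i=1..m. ln (mm i)) = ln (P m)"
      unfolding P_def using F by (subst ln_prod) force+
    also have "k * T * ln (P m) \<le> k * T * ln (rel_mix (\<lambda>x. gibbs k T (A 1) x / (1 - real m * eps)) (gibbs k T (A 1)))"
      using PR Pm assms by (intro mult_left_mono) auto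
    also have "\<dots> = work k T (real m * eps) (A 1) (A 1)" by (simp add: work_def)
    finally show ?thesis .
  qed
  have part2: "\<forall>B. valid_state B \<longrightarrow> work k T 0 B B = 0" using work_self by blast
  show ?thesis
  proof (intro conjI part2 allI impI)
    fix m :: nat and A :: "nat \<Rightarrow> state" and eps :: real
    assume "1 \<le> m" "\<forall>i\<in>{1..m}. valid_state (A i)" "0 \<le> eps" "real m * eps < 1"
    then show "(\<Sum>i=1..m. work k T eps (A i) (A (if i = m then 1 else i + 1)))
              \<le> work k T (real m * eps) (A 1) (A 1)" by (rule part1)
  next
    fix m :: nat and A :: "nat \<Rightarrow> state"
    assume m: "1 \<le> m" and v: "\<forall>i\<in>{1..m}. valid_state (A i)"
    have "(\<Sum>i=1..m. work k T 0 (A i) (A (if i = m then 1 else i + 1))) \<le> work k T (real m * 0) (A 1) (A 1)"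
      using part1[OF m v order.refl] by simp
    also have "\<dots> = 0" using part2 v m by auto
    finally show "(\<Sum>i=1..m. work k T 0 (A i) (A (if i = m then 1 else i + 1))) \<le> 0" .
  qed
qed

end
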